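(* Let $n\ge 2$, $a,b,c\in\mathbb{Z}_n$ and $P(x,y)=a+bx+cy$. Then $(\mathbb{Z}_n,* )$ with $x*y=P(x,y)$ is a quasigroup satisfying the Abel-Grassman law if and only if $c^2\equiv b\pmod n$ and $\gcd(b,n)=\gcd(c,n)=1$.
   Context: $\mathbb{Z}_n$ is the ring of integers modulo $n$. A groupoid $(G,\cdot)$ is a quasigroup if for all $u,v\in G$ the equations $u\cdot x=v$ and $y\cdot u=v$ have unique solutions. The Abel-Grassman law is $x\cdot(y\cdot z)=z\cdot(y\cdot x)$ for all $x,y,z$. *)

theory Defs
  imports "HOL-Number_Theory.Cong"
begin

definition Zn :: "int \<Rightarrow> int set" where
  "Zn n = {0..<n}"

definition quasigroup_on :: "'a set \<Rightarrow> ('a \<Rightarrow> 'a \<Rightarrow> 'a) \<Rightarrow> bool" where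
  "quasigroup_on G f \<longleftrightarrow>
     (\<forall>x\<in>G. \<forall>y\<in>G. f x y \<in> G) \<and>
     (\<forall>u\<in>G. \<forall>v\<in>G. (\<exists>!x. x \<in> G \<and> f u x = v) \<and> (\<exists>!y. y \<in> G \<and> f y u = v))"

definition abel_grassman_on :: "'a set \<Rightarrow> ('a \<Rightarrow> 'a \<Rightarrow> 'a) \<Rightarrow> bool" where
  "abel_grassman_on G f \<longleftrightarrow>
     (\<forall>x\<in>G. \<forall>y\<in>G. \<forall>z\<in>G. f x (f y z) = f z (f y x))"

definition linop :: "int \<Rightarrow> int \<Rightarrow> int \<Rightarrow> int \<Rightarrow> int \<Rightarrow> int \<Rightarrow> int" where
  "linop n a b c x y = (a + b * x + c * y) mod n"

end

theory Submission
  imports Defs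
begin

lemma uniq_sol:
  fixes n k d v :: int
  assumes "n > 0" "coprime k n" "v \<in> {0..<n}"
  shows "\<exists>!x. x \<in> {0..<n} \<and> (d + k * x) mod n = v"
proof -
  obtain i where i: "[k * i = 1] (mod n)" using assms(2) cong_solve_coprime_int by blast
  define x where "x = ((v - d) * i) mod n"
  have "[d + k * x = d + k * ((v - d) * i)] (mod n)"
    proof -
    have "[x = (v - d) * i] (mod n)" by (simp add: x_def cong_def)
    thus ?thesis by (intro cong_add cong_mult) auto
  qed
  moreover have "[d + k * ((v - d) * i) = d + (v - d) * (k * i)] (mod n)"
    by (simp add: algebra_simps)
  moreover have "[d + (v - d) * (k * i) = d + (v - d) * 1] (mod n)"
    using i by (intro cong_add cong_mult) auto
  ultimately have "[d + k * x = d + (v - d) * 1] (mod n)" using cong_trans by blast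
  hence "[d + k * x = v] (mod n)" by simp
  hence ex: "(d + k * x) mod n = v" using assms(3) by (simp add: cong_def)
  have xin: "x \<in> {0..<n}" using assms(1) unfolding x_def by simp
  show ?thesis
  proof (rule ex1I[of _ x])
    show "x \<in> {0..<n} \<and> (d + k * x) mod n = v" using ex xin by simp
  next
    fix y assume y: "y \<in> {0..<n} \<and> (d + k * y) mod n = v"
    hence "[d + k * y = d + k * x] (mod n)" using ex by (simp add: cong_def)
    hence "[k * y = k * x] (mod n)" by (simp add: cong_add_lcancel)
    hence "[y = x] (mod n)" using cong_mult_lcancel assms(2) by blast
    thus "y = x" using y xin cong_less_imp_eq_int by auto
  qed
qed

lemma sol_coprime:
  fixes n k d :: int
  assumes "n > 0" "\<exists>x. (d + k * x) mod n = (d + 1) mod n"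
  shows "coprime k n"
proof -
  obtain x where "(d + k * x) mod n = (d + 1) mod n" using assms by blast
  hence "[d + k * x = d + 1] (mod n)" by (simp add: cong_def)
  hence "[k * x = 1] (mod n)" by (simp add: cong_add_lcancel)
  thus ?thesis using coprime_iff_invertible_int by blast
qed

theorem mainTheorem10:
  fixes n a b c :: int
  assumes "n \<ge> 2" and "a \<in> Zn n" and "b \<in> Zn n" and "c \<in> Zn n"
  shows "(quasigroup_on (Zn n) (linop n a b c) \<and> abel_grassman_on (Zn n) (linop n a b c))
     \<longleftrightarrow> ([c^2 = b] (mod n) \<and> gcd b n = 1 \<and> gcd c n = 1)"
proof
  assume H: "quasigroup_on (Zn n) (linop n a b c) \<and> abel_grassman_on (Zn n) (linop n a b c)"
  have n0: "n > 0" using assms(1) by simp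
  have z: "0 \<in> Zn n" "1 \<in> Zn n" using assms(1) by (auto simp: Zn_def)
  have v: "(a + 1) mod n \<in> Zn n" using n0 by (simp add: Zn_def)
  from H z v obtain x where "linop n a b c 0 x = (a + 1) mod n"
    unfolding quasigroup_on_def by blast
  hence "coprime c n" using sol_coprime[OF n0, of a c] by (auto simp: linop_def)
  moreover from H z v obtain y where "linop n a b c y 0 = (a + 1) mod n"
    unfolding quasigroup_on_def by blast
  hence "(a + b * y) mod n = (a + 1) mod n" by (simp add: linop_def)
  hence "coprime b n" using sol_coprime[OF n0, of a b] by blast
  moreover have "[c^2 = b] (mod n)"
  proof -
    from H z have "linop n a b c 1 (linop n a b c 0 0) = linop n a b c 0 (linop n a b c 0 1)"
      unfolding abel_grassman_on_def by blast
    hence "(a + b + c * (a mod n)) mod n = (a + c * ((a + c) mod n)) mod n"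
      by (simp add: linop_def)
    hence "[a + b + c * (a mod n) = a + c * ((a + c) mod n)] (mod n)" by (simp add: cong_def)
    moreover have "[a + b + c * a = a + b + c * (a mod n)] (mod n)"
      by (intro cong_add cong_mult) (auto simp: cong_def)
    moreover have "[a + c * ((a + c) mod n) = a + c * (a + c)] (mod n)"
      by (intro cong_add cong_mult) (auto simp: cong_def)
    ultimately have "[a + b + c * a = a + c * (a + c)] (mod n)" using cong_trans by blast
    hence "(a + b + c * a) mod n = (a + c * (a + c)) mod n" by (simp add: cong_def)
    hence "[b + (a + c * a) = c^2 + (a + c * a)] (mod n)"
      by (simp add: cong_def algebra_simps power2_eq_square)
    thus ?thesis by (simp add: cong_add_rcancel cong_sym)
  qed
  ultimately show "[c^2 = b] (mod n) \<and> gcd b n = 1 \<and> gcd c n = 1"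
    by (simp add: coprime_iff_gcd_eq_1)
next
  assume H: "[c^2 = b] (mod n) \<and> gcd b n = 1 \<and> gcd c n = 1"
  have n0: "n > 0" using assms(1) by simp
  have cb: "coprime b n" "coprime c n" using H by (auto simp: coprime_iff_gcd_eq_1)
  have "quasigroup_on (Zn n) (linop n a b c)"
    unfolding quasigroup_on_def
  proof (intro conjI ballI)
    fix x y assume "x \<in> Zn n" "y \<in> Zn n"
    show "linop n a b c x y \<in> Zn n" using n0 by (simp add: linop_def Zn_def)
  next
    fix u v assume "u \<in> Zn n" "v \<in> Zn n"
    show "\<exists>!x. x \<in> Zn n \<and> linop n a b c u x = v"
      using uniq_sol[OF n0 cb(2), of v "a + b * u"] \<open>v \<in> Zn n\<close>
      by (simp add: Zn_def linop_def)
    show "\<exists>!y. y \<in> Zn n \<and> linop n a b c y u = v"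
      using uniq_sol[OF n0 cb(1), of v "a + c * u"] \<open>v \<in> Zn n\<close>
      by (simp add: Zn_def linop_def algebra_simps)
  qed
  moreover have "abel_grassman_on (Zn n) (linop n a b c)"
    unfolding abel_grassman_on_def
  proof (intro ballI)
    fix x y z assume "x \<in> Zn n" "y \<in> Zn n" "z \<in> Zn n"
    have e1: "linop n a b c x (linop n a b c y z) = (a + b * x + c * (a + b * y + c * z)) mod n"
      unfolding linop_def cong_def[symmetric] by (intro cong_add cong_mult) (auto simp: cong_def)
    have e2: "linop n a b c z (linop n a b c y x) = (a + b * z + c * (a + b * y + c * x)) mod n"
      unfolding linop_def cong_def[symmetric] by (intro cong_add cong_mult) (auto simp: cong_def)
    have cb2: "[c * c = b] (mod n)" using H by (simp add: power2_eq_square)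
    have "[a + b * x + c * (a + b * y + c * z) = (a + c * a + c * b * y) + (c * c) * z + b * x] (mod n)"
      by (simp add: algebra_simps)
    moreover have "[(a + c * a + c * b * y) + (c * c) * z + b * x = (a + c * a + c * b * y) + b * z + (c * c) * x] (mod n)"
      using cb2 by (intro cong_add cong_mult) (auto intro: cong_sym)
    moreover have "[(a + c * a + c * b * y) + b * z + (c * c) * x = a + b * z + c * (a + b * y + c * x)] (mod n)"
      by (simp add: algebra_simps)
    ultimately have "[a + b * x + c * (a + b * y + c * z) = a + b * z + c * (a + b * y + c * x)] (mod n)"
      using cong_trans by blast
    thus "linop n a b c x (linop n a b c y z) = linop n a b c z (linop n a b c y x)"
      using e1 e2 by (simp add: cong_def)
  qed
  ultimately show "quasigroup_on (Zn n) (linop n a b c) \<and> abel_grassman_on (Zn n) (linop n a b c)" ..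
qed

end
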